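(* Let $(A,\mathfrak m)$ be a local Prüfer ring which is not Gaussian and such that $\mathfrak m = Z(A)$, and let $I := \mathfrak m$. Then $A \bowtie I$ is a Prüfer ring and is not a Gaussian ring.
   Context: All rings are commutative with identity. For an ideal $I$ of a ring $A$, $A \bowtie I := \{(a, a+i) : a \in A, i \in I\}\subseteq A\times A$ (amalgamated duplication). $Z(A)$ is the set of zero-divisors of $A$. An ideal is regular if it contains a regular element. A ring $R$ is a Prüfer ring if every finitely generated regular ideal of $R$ is invertible. A ring $R$ is Gaussian if $c(gh)=c(g)c(h)$ for all $g,h\in R[x]$, where $c(p)$ is the ideal generated by the coefficients of $p$. *)

theory Defs
  imports "HOL-Algebra.Algebra"
begin

definition zero_divisors :: "('a, 'b) ring_scheme \<Rightarrow> 'a set" where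
  "zero_divisors R = {a \<in> carrier R. \<exists>b \<in> carrier R. b \<noteq> \<zero>\<^bsub>R\<^esub> \<and> a \<otimes>\<^bsub>R\<^esub> b = \<zero>\<^bsub>R\<^esub>}"

definition regular_elem :: "('a, 'b) ring_scheme \<Rightarrow> 'a \<Rightarrow> bool" where
  "regular_elem R s \<longleftrightarrow> s \<in> carrier R \<and> s \<notin> zero_divisors R"

definition regular_ideal :: "('a, 'b) ring_scheme \<Rightarrow> 'a set \<Rightarrow> bool" where
  "regular_ideal R I \<longleftrightarrow> ideal I R \<and> (\<exists>x \<in> I. regular_elem R x)"

definition fin_gen_ideal :: "('a, 'b) ring_scheme \<Rightarrow> 'a set \<Rightarrow> bool" where
  "fin_gen_ideal R I \<longleftrightarrow> (\<exists>S. finite S \<and> S \<subseteq> carrier R \<and> I = Idl\<^bsub>R\<^esub> S)"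

text \<open>Invertibility of an ideal I, i.e. I I^{-1} = R inside the total quotient ring T(R),
  where I^{-1} = {x \<in> T(R). x I \<subseteq> R}.  Written with a common regular denominator s:
  the ideal J = {a. \<forall>i\<in>I. a i \<in> sR} is s I^{-1} (intersected with R), and
  I I^{-1} = R  iff  I J = sR.\<close>
definition invertible_ideal :: "('a, 'b) ring_scheme \<Rightarrow> 'a set \<Rightarrow> bool" where
  "invertible_ideal R I \<longleftrightarrow>
     (\<exists>s. regular_elem R s \<and>
        I \<cdot>\<^bsub>R\<^esub> {a \<in> carrier R. \<forall>i \<in> I. a \<otimes>\<^bsub>R\<^esub> i \<in> PIdl\<^bsub>R\<^esub> s} = PIdl\<^bsub>R\<^esub> s)"

definition prufer_ring :: "('a, 'b) ring_scheme \<Rightarrow> bool" where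
  "prufer_ring R \<longleftrightarrow> cring R \<and>
     (\<forall>I. fin_gen_ideal R I \<and> regular_ideal R I \<longrightarrow> invertible_ideal R I)"

definition content_ideal :: "('a, 'b) ring_scheme \<Rightarrow> 'a list \<Rightarrow> 'a set" where
  "content_ideal R p = Idl\<^bsub>R\<^esub> (set p)"

definition gaussian_ring :: "('a, 'b) ring_scheme \<Rightarrow> bool" where
  "gaussian_ring R \<longleftrightarrow> cring R \<and>
     (\<forall>g \<in> carrier (univ_poly R (carrier R)). \<forall>h \<in> carrier (univ_poly R (carrier R)).
        content_ideal R (g \<otimes>\<^bsub>univ_poly R (carrier R)\<^esub> h)
          = content_ideal R g \<cdot>\<^bsub>R\<^esub> content_ideal R h)"

definition local_ring :: "('a, 'b) ring_scheme \<Rightarrow> 'a set \<Rightarrow> bool" where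
  "local_ring R m \<longleftrightarrow> cring R \<and> maximalideal m R \<and> (\<forall>M. maximalideal M R \<longrightarrow> M = m)"

definition amalg_dup :: "('a, 'b) ring_scheme \<Rightarrow> 'a set \<Rightarrow> ('a \<times> 'a) ring" where
  "amalg_dup R I = (RDirProd R R)
     \<lparr> carrier := {(a, a \<oplus>\<^bsub>R\<^esub> i) | a i. a \<in> carrier R \<and> i \<in> I} \<rparr>"

end

theory Submission
  imports Defs
begin

lemma P_simps:
  "carrier (RDirProd R S) = carrier R \<times> carrier S"
  "(x, y) \<otimes>\<^bsub>RDirProd R S\<^esub> (u, v) = (x \<otimes>\<^bsub>R\<^esub> u, y \<otimes>\<^bsub>S\<^esub> v)"
  "(x, y) \<oplus>\<^bsub>RDirProd R S\<^esub> (u, v) = (x \<oplus>\<^bsub>R\<^esub> u, y \<oplus>\<^bsub>S\<^esub> v)"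
  "\<zero>\<^bsub>RDirProd R S\<^esub> = (\<zero>\<^bsub>R\<^esub>, \<zero>\<^bsub>S\<^esub>)"
  "\<one>\<^bsub>RDirProd R S\<^esub> = (\<one>\<^bsub>R\<^esub>, \<one>\<^bsub>S\<^esub>)"
  by (auto simp add: RDirProd_def DirProd_def monoid.defs)

lemma P_inv:
  assumes "ring R" "ring S" "x \<in> carrier R" "y \<in> carrier S"
  shows "\<ominus>\<^bsub>RDirProd R S\<^esub> (x, y) = (\<ominus>\<^bsub>R\<^esub> x, \<ominus>\<^bsub>S\<^esub> y)"
proof -
  interpret P: ring "RDirProd R S" using RDirProd_ring assms by blast
  interpret R: ring R by fact
  interpret S: ring S by fact
  show ?thesis
    by (rule P.minus_equality) (auto simp: P_simps assms R.l_neg S.l_neg)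
qed

lemma D_simps:
  "carrier (amalg_dup R I) = {(a, a \<oplus>\<^bsub>R\<^esub> i) | a i. a \<in> carrier R \<and> i \<in> I}"
  "monoid.mult (amalg_dup R I) = monoid.mult (RDirProd R R)"
  "ring.add (amalg_dup R I) = ring.add (RDirProd R R)"
  "ring.zero (amalg_dup R I) = ring.zero (RDirProd R R)"
  "monoid.one (amalg_dup R I) = monoid.one (RDirProd R R)"
  by (auto simp add: amalg_dup_def)

lemma (in cring) nonunit_in_max:
  assumes uniq: "\<And>M. maximalideal M R \<Longrightarrow> M = m"
    and x: "x \<in> carrier R" "x \<notin> Units R"
  shows "x \<in> m"
proof -
  define S where "S = {I. ideal I R \<and> x \<in> I \<and> \<one> \<notin> I}"
  have "PIdl x \<in> S"
  proof -
    have "\<one> \<notin> PIdl x"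
    proof
      assume "\<one> \<in> PIdl x"
      then obtain y where y: "y \<in> carrier R" "\<one> = y \<otimes> x" unfolding cgenideal_def by auto
      have "x \<otimes> y = \<one>" using y x(1) m_comm by simp
      hence "x \<in> Units R" using x(1) y unfolding Units_def by force
      thus False using x by simp
    qed
    thus ?thesis unfolding S_def using cgenideal_ideal cgenideal_self x(1) by auto
  qed
  hence "S \<noteq> {}" by auto
  have "\<exists>M\<in>S. \<forall>Y\<in>S. M \<subseteq> Y \<longrightarrow> Y = M"
  proof (rule subset_Zorn_nonempty[OF \<open>S \<noteq> {}\<close>])
    fix C assume C: "C \<noteq> {}" "subset.chain S C"
    have "subset.chain {I. ideal I R} C" using C(2) unfolding pred_on.chain_def S_def by auto
    from chain_Union_is_ideal[OF this] C(1) have "ideal (\<Union>C) R" by simp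
    moreover have "x \<in> \<Union>C" using C unfolding pred_on.chain_def S_def by auto
    moreover have "\<one> \<notin> \<Union>C" using C unfolding pred_on.chain_def S_def by auto
    ultimately show "\<Union>C \<in> S" unfolding S_def by auto
  qed
  then obtain M where M: "M \<in> S" "\<And>Y. Y \<in> S \<Longrightarrow> M \<subseteq> Y \<Longrightarrow> Y = M" by auto
  have "maximalideal M R"
  proof (rule maximalidealI)
    show "ideal M R" using M(1) S_def by auto
    show "carrier R \<noteq> M" using M(1) S_def by auto
    fix J assume J: "ideal J R" "M \<subseteq> J" "J \<subseteq> carrier R"
    show "J = M \<or> J = carrier R"
    proof (cases "\<one> \<in> J")
      case True thus ?thesis using ideal.one_imp_carrier[OF J(1)] by auto
    next
      case False
      hence "J \<in> S" using J M(1) unfolding S_def by auto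
      thus ?thesis using M(2) J(2) by auto
    qed
  qed
  hence "M = m" by (rule uniq)
  thus ?thesis using M(1) S_def by auto
qed


lemma (in cring) e1: "a\<in>carrier R \<Longrightarrow> b\<in>carrier R \<Longrightarrow> \<ominus> b \<ominus> \<ominus> a = \<ominus> (b \<ominus> a)"
  by algebra
lemma (in cring) e2: "a\<in>carrier R \<Longrightarrow> b\<in>carrier R \<Longrightarrow> c\<in>carrier R \<Longrightarrow> d\<in>carrier R \<Longrightarrow> b \<otimes> d \<ominus> a \<otimes> c = b \<otimes> (d \<ominus> c) \<oplus> (b \<ominus> a) \<otimes> c"
  by algebra
lemma (in cring) e3: "a\<in>carrier R \<Longrightarrow> b\<in>carrier R \<Longrightarrow> c\<in>carrier R \<Longrightarrow> d\<in>carrier R \<Longrightarrow> (b \<oplus> d) \<ominus> (a \<oplus> c) = (b \<ominus> a) \<oplus> (d \<ominus> c)"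
  by algebra
lemma (in cring) e4:
  assumes "a\<in>carrier R" "i\<in>carrier R" "ai\<in>carrier R" "bi\<in>carrier R" "a \<otimes> ai = \<one>" "(a \<oplus> i) \<otimes> bi = \<one>"
  shows "bi \<ominus> ai = (\<ominus> i) \<otimes> (ai \<otimes> bi)"
proof -
  have "(\<ominus> i) \<otimes> (ai \<otimes> bi) = (a \<otimes> ai) \<otimes> bi \<ominus> ((a \<oplus> i) \<otimes> bi) \<otimes> ai" using assms(1-4) by algebra
  also have "\<dots> = bi \<ominus> ai" using assms by simp
  finally show ?thesis by simp
qed
lemma (in cring) e5:
  assumes "b\<in>carrier R" "c \<in> Units R" "b \<otimes> c = \<zero>"
  shows "b = \<zero>"
proof -
  have "b = b \<otimes> (c \<otimes> inv c)" using assms by simp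
  also have "\<dots> = (b \<otimes> c) \<otimes> inv c" using assms by (metis m_assoc Units_closed Units_inv_closed)
  also have "\<dots> = \<zero>" using assms by simp
  finally show ?thesis .
qed
lemma (in cring) e6: "a\<in>carrier R \<Longrightarrow> i\<in>carrier R \<Longrightarrow> a = (a \<oplus> i) \<ominus> i" by algebra

lemma (in cring) e7:
  assumes "a\<in>carrier R" "b\<in>carrier R" "ai\<in>carrier R" "bi\<in>carrier R" "a \<otimes> ai = \<one>" "b \<otimes> bi = \<one>"
  shows "bi \<ominus> ai = (a \<ominus> b) \<otimes> (ai \<otimes> bi)"
proof -
  have "(a \<ominus> b) \<otimes> (ai \<otimes> bi) = (a \<otimes> ai) \<otimes> bi \<ominus> (b \<otimes> bi) \<otimes> ai" using assms(1-4) by algebra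
  also have "\<dots> = bi \<ominus> ai" using assms by simp
  finally show ?thesis by simp
qed
lemma (in cring) e8: "a\<in>carrier R \<Longrightarrow> b\<in>carrier R \<Longrightarrow> a \<ominus> b = \<ominus> (b \<ominus> a)" by algebra
lemma (in cring) e9: "a\<in>carrier R \<Longrightarrow> b\<in>carrier R \<Longrightarrow> a = b \<ominus> (b \<ominus> a)" by algebra
lemma (in cring) e10: "a\<in>carrier R \<Longrightarrow> b\<in>carrier R \<Longrightarrow> b = a \<oplus> (b \<ominus> a)" by algebra

locale amd = cring A for A (structure) +
  fixes m
  assumes loc: "local_ring A m" and zd: "m = zero_divisors A"
begin

abbreviation "D \<equiv> amalg_dup A m"
abbreviation "P \<equiv> RDirProd A A"

lemma m_max: "maximalideal m A" using loc unfolding local_ring_def by auto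
lemma m_ideal: "ideal m A" by (rule maximalideal.axioms(1)[OF m_max])
lemma m_sub: "m \<subseteq> carrier A" using ideal.Icarr[OF m_ideal] by blast
lemma m_ne: "carrier A \<noteq> m" by (rule maximalideal.I_notcarr[OF m_max])

lemma zero_in_m: "\<zero> \<in> m"
  by (rule additive_subgroup.zero_closed[OF ideal.axioms(1)[OF m_ideal]])

lemma one_notin_m: "\<one> \<notin> m"
  using ideal.one_imp_carrier[OF m_ideal] m_ne by auto

lemma unit_iff: assumes "x \<in> carrier A" shows "x \<in> Units A \<longleftrightarrow> x \<notin> m"
proof
  assume u: "x \<in> Units A"
  show "x \<notin> m"
  proof
    assume "x \<in> m"
    have "inv x \<otimes> x \<in> m" by (rule ideal.I_l_closed[OF m_ideal \<open>x \<in> m\<close> Units_inv_closed[OF u]])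
    thus False using u one_notin_m Units_l_inv by simp
  qed
next
  assume "x \<notin> m"
  thus "x \<in> Units A" using nonunit_in_max[of m x] loc assms unfolding local_ring_def by blast
qed

lemma Dcarr: "(a, b) \<in> carrier D \<longleftrightarrow> a \<in> carrier A \<and> b \<in> carrier A \<and> b \<ominus> a \<in> m"
proof
  assume "(a, b) \<in> carrier D"
  then obtain i where "a \<in> carrier A" "i \<in> m" "b = a \<oplus> i" unfolding D_simps by auto
  moreover have "i \<in> carrier A" using m_sub \<open>i \<in> m\<close> by auto
  moreover have "(a \<oplus> i) \<ominus> a = i" using calculation
    by (simp add: minus_eq a_comm[of a i] a_assoc r_neg)
  ultimately show "a \<in> carrier A \<and> b \<in> carrier A \<and> b \<ominus> a \<in> m"
    by simp
next
  assume h: "a \<in> carrier A \<and> b \<in> carrier A \<and> b \<ominus> a \<in> m"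
  hence "b = a \<oplus> (b \<ominus> a)" by (simp add: minus_eq a_lcomm[of a b] r_neg)
  thus "(a, b) \<in> carrier D" using h unfolding D_simps by blast
qed

lemma Dc: "(a, b) \<in> carrier D \<Longrightarrow> a \<in> carrier A \<and> b \<in> carrier A \<and> b \<ominus> a \<in> m"
  using Dcarr by blast

lemma Dcarr_sub: "carrier D \<subseteq> carrier P"
  using Dcarr by (auto simp: P_simps)

lemma Pring: "ring P" using RDirProd_ring ring_axioms by blast

lemma D_cring: "cring D"
proof -
  interpret P: ring P by (rule Pring)
  have "subcring (carrier D) P"
  proof (rule P.subcringI)
    show "subring (carrier D) P"
    proof (rule P.subringI)
      show "carrier D \<subseteq> carrier P" by (rule Dcarr_sub)
      show "\<one>\<^bsub>P\<^esub> \<in> carrier D" by (simp add: P_simps Dcarr r_neg minus_eq zero_in_m)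
    next
      fix h assume h: "h \<in> carrier D"
      obtain a b where ab: "h = (a, b)" by (cases h)
      have c: "a \<in> carrier A" "b \<in> carrier A" "b \<ominus> a \<in> m" using h ab Dc by auto
      have "\<ominus> (b \<ominus> a) \<in> m"
        by (rule additive_subgroup.a_inv_closed[OF ideal.axioms(1)[OF m_ideal] c(3)])
      hence mem: "\<ominus> b \<ominus> \<ominus> a \<in> m" by (subst e1[OF c(1,2)])
      show "\<ominus>\<^bsub>P\<^esub> h \<in> carrier D" unfolding ab P_inv[OF ring_axioms ring_axioms c(1) c(2)] Dcarr
        using c mem a_inv_closed by blast
    next
      fix h1 h2 assume h: "h1 \<in> carrier D" "h2 \<in> carrier D"
      obtain a b where ab: "h1 = (a, b)" by (cases h1)
      obtain c d where cd: "h2 = (c, d)" by (cases h2)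
      have c1: "a \<in> carrier A" "b \<in> carrier A" "b \<ominus> a \<in> m" using h ab Dc by auto
      have c2: "c \<in> carrier A" "d \<in> carrier A" "d \<ominus> c \<in> m" using h cd Dc by auto
      have "b \<otimes> (d \<ominus> c) \<oplus> (b \<ominus> a) \<otimes> c \<in> m"
        by (rule additive_subgroup.a_closed[OF ideal.axioms(1)[OF m_ideal]
           ideal.I_l_closed[OF m_ideal c2(3) c1(2)] ideal.I_r_closed[OF m_ideal c1(3) c2(1)]])
      hence mem: "b \<otimes> d \<ominus> a \<otimes> c \<in> m" by (subst e2[OF c1(1,2) c2(1,2)])
      show "h1 \<otimes>\<^bsub>P\<^esub> h2 \<in> carrier D" unfolding ab cd P_simps(2) Dcarr
        using c1 c2 mem m_closed by blast
      have "(b \<ominus> a) \<oplus> (d \<ominus> c) \<in> m"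
        by (rule additive_subgroup.a_closed[OF ideal.axioms(1)[OF m_ideal] c1(3) c2(3)])
      hence mem: "(b \<oplus> d) \<ominus> (a \<oplus> c) \<in> m" by (subst e3[OF c1(1,2) c2(1,2)])
      show "h1 \<oplus>\<^bsub>P\<^esub> h2 \<in> carrier D" unfolding ab cd P_simps(3) Dcarr
        using c1 c2 mem a_closed by blast
    qed
  next
    fix h1 h2 assume h: "h1 \<in> carrier D" "h2 \<in> carrier D"
    obtain a b where ab: "h1 = (a, b)" by (cases h1)
    obtain c d where cd: "h2 = (c, d)" by (cases h2)
    have c1: "a \<in> carrier A" "b \<in> carrier A" using h ab Dc by auto
    have c2: "c \<in> carrier A" "d \<in> carrier A" using h cd Dc by auto
    show "h1 \<otimes>\<^bsub>P\<^esub> h2 = h2 \<otimes>\<^bsub>P\<^esub> h1" using ab cd c1 c2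
      by (simp add: P_simps m_comm[of a c] m_comm[of b d])
  qed
  hence "cring (P\<lparr>carrier := carrier D\<rparr>)" using P.subcring_iff[OF Dcarr_sub] by blast
  moreover have "P\<lparr>carrier := carrier D\<rparr> = D" unfolding amalg_dup_def by simp
  ultimately show ?thesis by metis
qed



lemma D_mult: "(a, b) \<otimes>\<^bsub>D\<^esub> (c, d) = (a \<otimes> c, b \<otimes> d)"
  by (simp add: D_simps P_simps)
lemma D_add: "(a, b) \<oplus>\<^bsub>D\<^esub> (c, d) = (a \<oplus> c, b \<oplus> d)"
  by (simp add: D_simps P_simps)
lemma D_zero: "\<zero>\<^bsub>D\<^esub> = (\<zero>, \<zero>)"
  by (simp add: D_simps P_simps)
lemma D_one: "\<one>\<^bsub>D\<^esub> = (\<one>, \<one>)"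
  by (simp add: D_simps P_simps)

lemma fst_mult: "fst (x \<otimes>\<^bsub>D\<^esub> y) = fst x \<otimes> fst y"
  by (cases x, cases y) (simp add: D_mult)
lemma fst_add: "fst (x \<oplus>\<^bsub>D\<^esub> y) = fst x \<oplus> fst y"
  by (cases x, cases y) (simp add: D_add)

lemma diag_carr: "a \<in> carrier A \<Longrightarrow> (a, a) \<in> carrier D"
  by (simp add: Dcarr r_neg minus_eq zero_in_m)

lemma diag_hom: "ring_hom_ring A D (\<lambda>a. (a, a))"
proof (rule ring_hom_ringI2)
  show "ring A" by (rule ring_axioms)
  show "ring D" by (rule cring.axioms(1)[OF D_cring])
  show "(\<lambda>a. (a, a)) \<in> ring_hom A D"
    by (rule ring_hom_memI) (auto simp: diag_carr D_mult D_add D_one)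
qed

lemma fst_hom: "ring_hom_ring D A fst"
proof (rule ring_hom_ringI2)
  show "ring A" by (rule ring_axioms)
  show "ring D" by (rule cring.axioms(1)[OF D_cring])
  show "fst \<in> ring_hom D A"
    by (rule ring_hom_memI) (auto simp: Dcarr fst_mult fst_add D_one)
qed

lemma fst_ideal_prod: "fst ` (I \<cdot>\<^bsub>D\<^esub> J) = (fst ` I) \<cdot>\<^bsub>A\<^esub> (fst ` J)"
proof
  show "fst ` (I \<cdot>\<^bsub>D\<^esub> J) \<subseteq> (fst ` I) \<cdot>\<^bsub>A\<^esub> (fst ` J)"
  proof
    fix y assume "y \<in> fst ` (I \<cdot>\<^bsub>D\<^esub> J)"
    then obtain z where z: "z \<in> I \<cdot>\<^bsub>D\<^esub> J" "y = fst z" by auto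
    have "fst z \<in> (fst ` I) \<cdot>\<^bsub>A\<^esub> (fst ` J)" using z(1)
    proof (induct z rule: ideal_prod.induct)
      case (prod i j) thus ?case by (simp add: fst_mult ideal_prod.prod)
    next
      case (sum s1 s2) thus ?case by (simp add: fst_add ideal_prod.sum)
    qed
    thus "y \<in> (fst ` I) \<cdot>\<^bsub>A\<^esub> (fst ` J)" using z by simp
  qed
next
  show "(fst ` I) \<cdot>\<^bsub>A\<^esub> (fst ` J) \<subseteq> fst ` (I \<cdot>\<^bsub>D\<^esub> J)"
  proof
    fix y assume "y \<in> (fst ` I) \<cdot>\<^bsub>A\<^esub> (fst ` J)"
    thus "y \<in> fst ` (I \<cdot>\<^bsub>D\<^esub> J)"
    proof (induct y rule: ideal_prod.induct)
      case (prod i j)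
      then obtain i' j' where "i' \<in> I" "j' \<in> J" "i = fst i'" "j = fst j'" by auto
      hence "i \<otimes> j = fst (i' \<otimes>\<^bsub>D\<^esub> j')" "i' \<otimes>\<^bsub>D\<^esub> j' \<in> I \<cdot>\<^bsub>D\<^esub> J"
        by (simp_all add: fst_mult ideal_prod.prod)
      thus ?case by blast
    next
      case (sum s1 s2)
      then obtain s1' s2' where "s1' \<in> I \<cdot>\<^bsub>D\<^esub> J" "s2' \<in> I \<cdot>\<^bsub>D\<^esub> J" "s1 = fst s1'" "s2 = fst s2'" by auto
      hence "s1 \<oplus> s2 = fst (s1' \<oplus>\<^bsub>D\<^esub> s2')" "s1' \<oplus>\<^bsub>D\<^esub> s2' \<in> I \<cdot>\<^bsub>D\<^esub> J"
        by (simp_all add: fst_add ideal_prod.sum)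
      thus ?case by blast
    qed
  qed
qed

lemma fst_Idl:
  assumes S: "S \<subseteq> carrier A"
  shows "fst ` (Idl\<^bsub>D\<^esub> ((\<lambda>a. (a, a)) ` S)) = Idl S"
proof -
  interpret DR: cring D by (rule D_cring)
  interpret dh: ring_hom_ring A D "\<lambda>a. (a, a)" by (rule diag_hom)
  interpret fh: ring_hom_ring D A fst by (rule fst_hom)
  have dS: "(\<lambda>a. (a, a)) ` S \<subseteq> carrier D" using S diag_carr by auto
  have I1: "ideal {r \<in> carrier A. (r, r) \<in> Idl\<^bsub>D\<^esub> ((\<lambda>a. (a, a)) ` S)} A"
    using dh.ideal_vimage[OF DR.genideal_ideal[OF dS]] by simp
  have "S \<subseteq> {r \<in> carrier A. (r, r) \<in> Idl\<^bsub>D\<^esub> ((\<lambda>a. (a, a)) ` S)}"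
    using S DR.genideal_self[OF dS] by auto
  hence sub1: "Idl S \<subseteq> {r \<in> carrier A. (r, r) \<in> Idl\<^bsub>D\<^esub> ((\<lambda>a. (a, a)) ` S)}"
    using genideal_minimal[OF I1] by blast
  have I2: "ideal {r \<in> carrier D. fst r \<in> Idl S} D"
    using fh.ideal_vimage[OF genideal_ideal[OF S]] by simp
  have "(\<lambda>a. (a, a)) ` S \<subseteq> {r \<in> carrier D. fst r \<in> Idl S}"
    using dS genideal_self[OF S] by auto
  hence sub2: "Idl\<^bsub>D\<^esub> ((\<lambda>a. (a, a)) ` S) \<subseteq> {r \<in> carrier D. fst r \<in> Idl S}"
    using DR.genideal_minimal[OF I2] by blast
  show ?thesis
  proof
    show "fst ` (Idl\<^bsub>D\<^esub> ((\<lambda>a. (a, a)) ` S)) \<subseteq> Idl S" using sub2 by auto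
    show "Idl S \<subseteq> fst ` (Idl\<^bsub>D\<^esub> ((\<lambda>a. (a, a)) ` S))"
    proof
      fix x assume "x \<in> Idl S"
      hence "(x, x) \<in> Idl\<^bsub>D\<^esub> ((\<lambda>a. (a, a)) ` S)" using sub1 by auto
      thus "x \<in> fst ` (Idl\<^bsub>D\<^esub> ((\<lambda>a. (a, a)) ` S))" by force
    qed
  qed
qed


lemma m_minus: "x \<in> m \<Longrightarrow> y \<in> m \<Longrightarrow> x \<ominus> y \<in> m"
  unfolding minus_eq
  by (rule additive_subgroup.a_closed[OF ideal.axioms(1)[OF m_ideal]])
     (simp_all add: additive_subgroup.a_inv_closed[OF ideal.axioms(1)[OF m_ideal]])
lemma m_plus: "x \<in> m \<Longrightarrow> y \<in> m \<Longrightarrow> x \<oplus> y \<in> m"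
  by (rule additive_subgroup.a_closed[OF ideal.axioms(1)[OF m_ideal]])
lemma m_neg: "x \<in> m \<Longrightarrow> \<ominus> x \<in> m"
  by (rule additive_subgroup.a_inv_closed[OF ideal.axioms(1)[OF m_ideal]])

lemma reg_unit:
  assumes reg: "regular_elem D x"
  shows "x \<in> Units D"
proof -
  have xD: "x \<in> carrier D" and nz: "x \<notin> zero_divisors D" using reg unfolding regular_elem_def by auto
  obtain a b where ab: "x = (a, b)" by (cases x)
  have c: "a \<in> carrier A" "b \<in> carrier A" "b \<ominus> a \<in> m" using xD ab Dc by auto
  show ?thesis
  proof (cases "a \<in> m")
    case False
    have ua: "a \<in> Units A" using unit_iff[OF c(1)] False by simp
    have bm: "b \<notin> m"
    proof
      assume "b \<in> m"
      hence "b \<ominus> (b \<ominus> a) \<in> m" using m_minus c(3) by simp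
      thus False using e9[OF c(1,2)] False by simp
    qed
    have ub: "b \<in> Units A" using unit_iff[OF c(2)] bm by simp
    define ai where "ai = inv a"
    define bi where "bi = inv b"
    have ai: "ai \<in> carrier A" "a \<otimes> ai = \<one>" "ai \<otimes> a = \<one>" using ua unfolding ai_def by simp_all
    have bi: "bi \<in> carrier A" "b \<otimes> bi = \<one>" "bi \<otimes> b = \<one>" using ub unfolding bi_def by simp_all
    have "a \<ominus> b \<in> m" using e8[OF c(1,2)] m_neg[OF c(3)] by simp
    hence "(a \<ominus> b) \<otimes> (ai \<otimes> bi) \<in> m"
      using ideal.I_r_closed[OF m_ideal] ai(1) bi(1) m_closed by simp
    hence "bi \<ominus> ai \<in> m" using e7[OF c(1,2) ai(1) bi(1) ai(2) bi(2)] by simp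
    hence yD: "(ai, bi) \<in> carrier D" using Dcarr ai(1) bi(1) by simp
    have "(ai, bi) \<otimes>\<^bsub>D\<^esub> x = \<one>\<^bsub>D\<^esub>" "x \<otimes>\<^bsub>D\<^esub> (ai, bi) = \<one>\<^bsub>D\<^esub>"
      using ab ai bi by (simp_all add: D_mult D_one)
    thus ?thesis using xD yD unfolding Units_def by force
  next
    case True
    have bm: "b \<in> m" using e10[OF c(1,2)] m_plus[OF True c(3)] by simp
    have "x \<in> zero_divisors D"
    proof (cases "b = \<zero>")
      case True
      from \<open>a \<in> m\<close> zd obtain z where z: "z \<in> carrier A" "z \<noteq> \<zero>" "a \<otimes> z = \<zero>"
        unfolding zero_divisors_def by auto
      have "(z, z) \<in> carrier D" by (rule diag_carr[OF z(1)])
      moreover have "(z, z) \<noteq> \<zero>\<^bsub>D\<^esub>" using z(2) by (simp add: D_zero)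
      moreover have "x \<otimes>\<^bsub>D\<^esub> (z, z) = \<zero>\<^bsub>D\<^esub>" using ab True z by (simp add: D_mult D_zero)
      ultimately show ?thesis using xD unfolding zero_divisors_def by blast
    next
      case False
      from bm zd obtain z where z: "z \<in> carrier A" "z \<noteq> \<zero>" "b \<otimes> z = \<zero>"
        unfolding zero_divisors_def by auto
      have zm: "z \<in> m"
      proof (rule ccontr)
        assume "z \<notin> m"
        hence "z \<in> Units A" using unit_iff[OF z(1)] by simp
        hence "b = \<zero>" using e5[OF c(2) _ z(3)] by simp
        thus False using False by simp
      qed
      have "(\<zero>, z) \<in> carrier D" using Dcarr z(1) zm by (simp add: minus_eq)
      moreover have "(\<zero>, z) \<noteq> \<zero>\<^bsub>D\<^esub>" using z(2) by (simp add: D_zero)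
      moreover have "x \<otimes>\<^bsub>D\<^esub> (\<zero>, z) = \<zero>\<^bsub>D\<^esub>" using ab c z by (simp add: D_mult D_zero)
      ultimately show ?thesis using xD unfolding zero_divisors_def by blast
    qed
    thus ?thesis using nz by simp
  qed
qed


lemma D_prufer: "prufer_ring D"
  unfolding prufer_ring_def
proof (intro conjI allI impI)
  interpret DR: cring D by (rule D_cring)
  show "cring D" by (rule DR.is_cring)
  fix I assume "fin_gen_ideal D I \<and> regular_ideal D I"
  then obtain x where I: "ideal I D" and x: "x \<in> I" "regular_elem D x"
    unfolding regular_ideal_def by auto
  have ux: "x \<in> Units D" by (rule reg_unit[OF x(2)])
  have "inv\<^bsub>D\<^esub> x \<otimes>\<^bsub>D\<^esub> x \<in> I"
    by (rule ideal.I_l_closed[OF I x(1) DR.Units_inv_closed[OF ux]])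
  hence "\<one>\<^bsub>D\<^esub> \<in> I" using ux by simp
  hence Ic: "I = carrier D" by (rule ideal.one_imp_carrier[OF I])
  have r1: "regular_elem D \<one>\<^bsub>D\<^esub>"
    unfolding regular_elem_def zero_divisors_def by auto
  have P1: "PIdl\<^bsub>D\<^esub> \<one>\<^bsub>D\<^esub> = carrier D"
  proof
    show "PIdl\<^bsub>D\<^esub> \<one>\<^bsub>D\<^esub> \<subseteq> carrier D" unfolding cgenideal_def by auto
    show "carrier D \<subseteq> PIdl\<^bsub>D\<^esub> \<one>\<^bsub>D\<^esub>"
    proof
      fix y assume "y \<in> carrier D"
      hence "y = y \<otimes>\<^bsub>D\<^esub> \<one>\<^bsub>D\<^esub>" "y \<in> carrier D" by simp_all
      thus "y \<in> PIdl\<^bsub>D\<^esub> \<one>\<^bsub>D\<^esub>" unfolding cgenideal_def by blast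
    qed
  qed
  have J: "{a \<in> carrier D. \<forall>i \<in> carrier D. a \<otimes>\<^bsub>D\<^esub> i \<in> carrier D} = carrier D"
    by auto
  have CC: "carrier D \<cdot>\<^bsub>D\<^esub> carrier D = carrier D"
  proof
    show "carrier D \<cdot>\<^bsub>D\<^esub> carrier D \<subseteq> carrier D"
      by (rule DR.ideal_prod_in_carrier[OF DR.oneideal DR.oneideal])
    show "carrier D \<subseteq> carrier D \<cdot>\<^bsub>D\<^esub> carrier D"
    proof
      fix y assume y: "y \<in> carrier D"
      have "y \<otimes>\<^bsub>D\<^esub> \<one>\<^bsub>D\<^esub> \<in> carrier D \<cdot>\<^bsub>D\<^esub> carrier D"
        by (rule ideal_prod.prod) (simp_all add: y)
      thus "y \<in> carrier D \<cdot>\<^bsub>D\<^esub> carrier D" using y by simp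
    qed
  qed
  show "invertible_ideal D I"
    unfolding invertible_ideal_def
  proof (intro exI conjI)
    show "regular_elem D \<one>\<^bsub>D\<^esub>" by (rule r1)
    show "I \<cdot>\<^bsub>D\<^esub> {a \<in> carrier D. \<forall>i \<in> I. a \<otimes>\<^bsub>D\<^esub> i \<in> PIdl\<^bsub>D\<^esub> \<one>\<^bsub>D\<^esub>} = PIdl\<^bsub>D\<^esub> \<one>\<^bsub>D\<^esub>"
      unfolding Ic P1 J CC ..
  qed
qed


lemma map_poly:
  assumes "polynomial (carrier A) p"
  shows "polynomial\<^bsub>D\<^esub> (carrier D) (map (\<lambda>a. (a, a)) p)"
proof (cases p)
  case Nil thus ?thesis by (simp add: polynomial_def)
next
  case (Cons c q)
  have "set p \<subseteq> carrier A" "c \<noteq> \<zero>" using assms Cons unfolding polynomial_def by auto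
  thus ?thesis using Cons diag_carr unfolding polynomial_def by (auto simp: D_zero)
qed

lemma content_map:
  "content_ideal D (map (\<lambda>a. (a, a)) p) = Idl\<^bsub>D\<^esub> ((\<lambda>a. (a, a)) ` set p)"
  unfolding content_ideal_def by simp

lemma D_not_gauss:
  assumes ng: "\<not> gaussian_ring A"
  shows "\<not> gaussian_ring D"
proof
  assume gD: "gaussian_ring D"
  interpret DR: cring D by (rule D_cring)
  interpret dh: ring_hom_ring A D "\<lambda>a. (a, a)" by (rule diag_hom)
  obtain g h where g: "g \<in> carrier (univ_poly A (carrier A))" and h: "h \<in> carrier (univ_poly A (carrier A))"
    and neq: "content_ideal A (g \<otimes>\<^bsub>univ_poly A (carrier A)\<^esub> h) \<noteq> content_ideal A g \<cdot>\<^bsub>A\<^esub> content_ideal A h"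
    using ng is_cring unfolding gaussian_ring_def by auto
  have pg: "polynomial (carrier A) g" and ph: "polynomial (carrier A) h"
    using g h univ_poly_carrier by blast+
  have sg: "set g \<subseteq> carrier A" and sh: "set h \<subseteq> carrier A"
    using polynomial_incl[OF pg] polynomial_incl[OF ph] .
  have gh: "g \<otimes>\<^bsub>univ_poly A (carrier A)\<^esub> h = poly_mult g h" by (simp add: univ_poly_mult)
  have pgh: "polynomial (carrier A) (poly_mult g h)"
    by (rule poly_mult_closed[OF carrier_is_subring pg ph])
  have sgh: "set (poly_mult g h) \<subseteq> carrier A" using polynomial_incl[OF pgh] .
  let ?G = "map (\<lambda>a. (a, a)) g"
  let ?H = "map (\<lambda>a. (a, a)) h"
  have G: "?G \<in> carrier (univ_poly D (carrier D))" using map_poly[OF pg] univ_poly_carrier by blast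
  have H: "?H \<in> carrier (univ_poly D (carrier D))" using map_poly[OF ph] univ_poly_carrier by blast
  have GH: "?G \<otimes>\<^bsub>univ_poly D (carrier D)\<^esub> ?H = map (\<lambda>a. (a, a)) (poly_mult g h)"
  proof -
    have "?G \<otimes>\<^bsub>univ_poly D (carrier D)\<^esub> ?H = DR.poly_mult ?G ?H" by (simp add: univ_poly_mult)
    also have "\<dots> = DR.normalize (map (\<lambda>a. (a, a)) (poly_mult g h))"
      using dh.poly_mult_hom'[OF sg sh] by simp
    also have "\<dots> = map (\<lambda>a. (a, a)) (poly_mult g h)"
      by (rule DR.normalize_polynomial[OF map_poly[OF pgh]])
    finally show ?thesis .
  qed
  have "content_ideal D (?G \<otimes>\<^bsub>univ_poly D (carrier D)\<^esub> ?H) = content_ideal D ?G \<cdot>\<^bsub>D\<^esub> content_ideal D ?H"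
    using gD G H unfolding gaussian_ring_def by blast
  hence eq: "Idl\<^bsub>D\<^esub> ((\<lambda>a. (a, a)) ` set (poly_mult g h))
      = (Idl\<^bsub>D\<^esub> ((\<lambda>a. (a, a)) ` set g)) \<cdot>\<^bsub>D\<^esub> (Idl\<^bsub>D\<^esub> ((\<lambda>a. (a, a)) ` set h))"
    unfolding GH content_map .
  have "content_ideal A (g \<otimes>\<^bsub>univ_poly A (carrier A)\<^esub> h) = fst ` (Idl\<^bsub>D\<^esub> ((\<lambda>a. (a, a)) ` set (poly_mult g h)))"
    unfolding gh content_ideal_def fst_Idl[OF sgh] ..
  also have "\<dots> = (fst ` (Idl\<^bsub>D\<^esub> ((\<lambda>a. (a, a)) ` set g))) \<cdot>\<^bsub>A\<^esub> (fst ` (Idl\<^bsub>D\<^esub> ((\<lambda>a. (a, a)) ` set h)))"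
    unfolding eq fst_ideal_prod ..
  also have "\<dots> = content_ideal A g \<cdot>\<^bsub>A\<^esub> content_ideal A h"
    unfolding content_ideal_def fst_Idl[OF sg] fst_Idl[OF sh] ..
  finally show False using neq by simp
qed

end

theorem mainTheorem9:
  fixes A :: "('a, 'b) ring_scheme" and m :: "'a set"
  assumes "cring A"
    and "local_ring A m"
    and "prufer_ring A"
    and "\<not> gaussian_ring A"
    and "m = zero_divisors A"
  shows "prufer_ring (amalg_dup A m) \<and> \<not> gaussian_ring (amalg_dup A m)"
proof -
  have am: "amd A m" by (rule amd.intro[OF assms(1) amd_axioms.intro[OF assms(2) assms(5)]])
  show ?thesis using amd.D_prufer[OF am] amd.D_not_gauss[OF am assms(4)] by simp
qed

end
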